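(* Let $\mathcal{L}\subseteq\mathcal{L}_c$ be a class of latency functions and consider a parallel-link network with $n=2$ links, unit demand and $\ell_1,\ell_2\in\mathcal{L}$. Let $x^*$ be an optimal flow. If there is $i\in\{1,2\}$ with $x_i(0)>x^*_i$ and $x_i(0)\le\frac12$, then $$C(x(0))\le \frac{1}{1-\mu_1(\mathcal{L})/2}\,C(x^* ).$$
   Context: $\mathcal{L}_c$: strictly increasing, convex, continuously differentiable functions $\mathbb{R}_+\to\mathbb{R}_+$. Flows $x\in\mathbb{R}^2_+$ with $x_1+x_2=1$; $C(x)=\sum_i\ell_i(x_i)x_i$; $x^*$ minimizes $C$ over flows. $x(0)$ is the (untolled) Wardrop equilibrium: for all $i,j$ with $x_i>0$, $\ell_i(x_i)\le\ell_j(x_j)$. For $\ell\in\mathcal{L}$ define $\mu_1(\ell)=\sup_{x,x^*\ge0}\frac{(\ell(x)-\ell(x^* ))\,x^*}{\ell(x)\,x}$, and $\mu_1(\mathcal{L})=\sup_{\ell\in\mathcal{L}}\mu_1(\ell)$ (which lies in $[0,1]$). *)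

theory Defs
  imports "HOL-Analysis.Analysis"
begin

definition Lc :: "(real \<Rightarrow> real) set" where
  "Lc = {l. strict_mono_on {0..} l \<and> convex_on {0..} l \<and> (\<forall>x\<ge>0. l x \<ge> 0) \<and>
          (\<exists>l'. continuous_on {0..} l' \<and>
                (\<forall>x\<ge>0. (l has_real_derivative l' x) (at x within {0..})))}"

definition mu1 :: "(real \<Rightarrow> real) \<Rightarrow> real" where
  "mu1 l = Sup {(l x - l xs) * xs / (l x * x) | x xs. x \<ge> 0 \<and> xs \<ge> 0}"

definition mu1_class :: "(real \<Rightarrow> real) set \<Rightarrow> real" where
  "mu1_class L = (SUP l\<in>L. mu1 l)"

definition is_flow :: "(nat \<Rightarrow> real) \<Rightarrow> bool" where
  "is_flow x \<longleftrightarrow> x 1 \<ge> 0 \<and> x 2 \<ge> 0 \<and> x 1 + x 2 = 1"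

definition cost :: "(nat \<Rightarrow> real \<Rightarrow> real) \<Rightarrow> (nat \<Rightarrow> real) \<Rightarrow> real" where
  "cost l x = (\<Sum>i\<in>{1,2}. l i (x i) * x i)"

definition wardrop :: "(nat \<Rightarrow> real \<Rightarrow> real) \<Rightarrow> (nat \<Rightarrow> real) \<Rightarrow> bool" where
  "wardrop l x \<longleftrightarrow> is_flow x \<and>
     (\<forall>i\<in>{1,2}. \<forall>j\<in>{1,2::nat}. x i > 0 \<longrightarrow> l i (x i) \<le> l j (x j))"

definition optimal :: "(nat \<Rightarrow> real \<Rightarrow> real) \<Rightarrow> (nat \<Rightarrow> real) \<Rightarrow> bool" where
  "optimal l x \<longleftrightarrow> is_flow x \<and> (\<forall>y. is_flow y \<longrightarrow> cost l x \<le> cost l y)"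

end

theory Submission
  imports Defs
begin

lemma Lc_nonneg: "l \<in> Lc \<Longrightarrow> x \<ge> 0 \<Longrightarrow> l x \<ge> 0"
  unfolding Lc_def by auto

lemma Lc_mono: "l \<in> Lc \<Longrightarrow> 0 \<le> x \<Longrightarrow> x \<le> y \<Longrightarrow> l x \<le> l y"
  unfolding Lc_def using strict_mono_on_leD by fastforce

lemma mu1_elem_le1:
  assumes "l \<in> Lc" "x \<ge> 0" "y \<ge> 0"
  shows "(l x - l y) * y / (l x * x) \<le> 1"
proof (cases "x = 0 \<or> l x = 0")
  case True then show ?thesis by auto
next
  case False
  have lx: "l x > 0" using False Lc_nonneg[OF assms(1,2)] by auto
  have xp: "x > 0" using False assms(2) by auto
  have "(l x - l y) * y \<le> l x * x"
  proof (cases "y \<ge> x")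
    case True
    then have "l y \<ge> l x" using Lc_mono[OF assms(1,2)] by auto
    then have "(l x - l y) * y \<le> 0" using assms(3) by (simp add: mult_nonpos_nonneg)
    then show ?thesis using lx xp by (smt (verit) mult_pos_pos)
  next
    case False
    have "(l x - l y) * y \<le> l x * y" using Lc_nonneg[OF assms(1,3)] assms(3)
      by (simp add: mult_right_mono)
    also have "\<dots> \<le> l x * x" using False lx by simp
    finally show ?thesis .
  qed
  then show ?thesis using lx xp by simp
qed

lemma mu1_bdd: "l \<in> Lc \<Longrightarrow> bdd_above {(l x - l xs) * xs / (l x * x) | x xs. x \<ge> 0 \<and> xs \<ge> 0}"
  unfolding bdd_above_def using mu1_elem_le1 by blast

lemma mu1_le1: "l \<in> Lc \<Longrightarrow> mu1 l \<le> 1"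
  unfolding mu1_def by (rule cSup_least) (auto intro: mu1_elem_le1)

lemma mu1_ge: "l \<in> Lc \<Longrightarrow> x \<ge> 0 \<Longrightarrow> y \<ge> 0 \<Longrightarrow> (l x - l y) * y / (l x * x) \<le> mu1 l"
  unfolding mu1_def by (rule cSup_upper) (auto intro: mu1_bdd)

lemma mu1_nonneg: "l \<in> Lc \<Longrightarrow> mu1 l \<ge> 0"
  using mu1_ge[of l 1 1] by simp

lemma core:
  fixes la lb :: "real \<Rightarrow> real"
  assumes la: "la \<in> Lc" and lb: "lb \<in> Lc"
    and a: "a0 > as" "as \<ge> 0" "a0 \<le> 1/2" "a0 + b0 = 1" "as + bs = 1" "bs \<ge> 0"
    and w: "la a0 \<le> lb b0" "lb b0 \<le> la a0"
    and M: "mu1 la \<le> M" "M \<le> 1"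
  shows "la a0 * a0 + lb b0 * b0 \<le> 1/(1-M/2) * (la as * as + lb bs * bs)"
proof -
  define L0 where "L0 = la a0"
  have eq: "lb b0 = L0" using w L0_def by simp
  have L0: "L0 \<ge> 0" using Lc_nonneg[OF la] a L0_def by simp
  have M0: "M \<ge> 0" using mu1_nonneg[OF la] M by simp
  have lhs: "la a0 * a0 + lb b0 * b0 = L0" proof -
    have "la a0 * a0 + lb b0 * b0 = L0 * (a0 + b0)" using eq L0_def by (simp add: algebra_simps)
    then show ?thesis using a(4) by simp
  qed
  have key: "(la a0 - la as) * as \<le> mu1 la * (la a0 * a0)"
  proof (cases "la a0 = 0")
    case True
    then show ?thesis using Lc_nonneg[OF la a(2)] a(2) by (simp add: mult_nonpos_nonneg)
  next
    case False
    then have pos: "la a0 * a0 > 0" using L0 L0_def a by simp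
    have "(la a0 - la as) * as / (la a0 * a0) \<le> mu1 la" using mu1_ge[OF la, of a0 as] a by simp
    then show ?thesis using pos by (simp add: divide_le_eq)
  qed
  have "mu1 la * (la a0 * a0) \<le> M * (L0 * a0)" using M(1) L0 L0_def a
    by (simp add: mult_right_mono)
  also have "\<dots> \<le> M * (L0 / 2)" using M0 L0 a(3) by (intro mult_left_mono) (auto, metis mult_left_mono mult.assoc mult_1_right)
  finally have k1: "la as * as \<ge> L0 * as - M * (L0/2)" using key L0_def by (simp add: algebra_simps)
  have "b0 \<le> bs" "0 \<le> b0" using a by linarith+
  then have "lb b0 \<le> lb bs" using Lc_mono[OF lb, of b0 bs] by blast
  then have "lb bs \<ge> L0" using eq by simp
  then have k2: "lb bs * bs \<ge> L0 * bs" using a(6) by (simp add: mult_right_mono)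
  have "L0 = L0 * as + L0 * bs" using a(5) by (metis distrib_left mult_1_right)
  then have "la as * as + lb bs * bs \<ge> L0 * (1 - M/2)" using k1 k2
    by (simp add: algebra_simps)
  moreover have "1 - M/2 > 0" using M by simp
  ultimately show ?thesis using lhs by (simp add: divide_simps mult.commute)
qed

theorem mainTheorem10:
  fixes L :: "(real \<Rightarrow> real) set" and l :: "nat \<Rightarrow> real \<Rightarrow> real"
    and x0 xs :: "nat \<Rightarrow> real" and i :: nat
  assumes "L \<subseteq> Lc" and "l 1 \<in> L" and "l 2 \<in> L"
    and "wardrop l x0" and "optimal l xs"
    and "i \<in> {1,2}" and "x0 i > xs i" and "x0 i \<le> 1/2"
  shows "cost l x0 \<le> 1 / (1 - mu1_class L / 2) * cost l xs"
proof -
  have bdd: "bdd_above (mu1 ` L)"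
    using assms(1) mu1_le1 unfolding bdd_above_def by blast
  have Mle: "mu1_class L \<le> 1" unfolding mu1_class_def
    using assms(1,2) mu1_le1 by (intro cSUP_least) auto
  have Mge: "\<And>f. f \<in> L \<Longrightarrow> mu1 f \<le> mu1_class L" unfolding mu1_class_def
    using bdd by (rule cSUP_upper2) auto
  have l1: "l 1 \<in> Lc" and l2: "l 2 \<in> Lc" using assms(1-3) by auto
  have fx: "is_flow x0" "is_flow xs" using assms(4,5) unfolding wardrop_def optimal_def by auto
  have W: "\<And>a b. a \<in> {1,2} \<Longrightarrow> b \<in> {1,2} \<Longrightarrow> x0 a > 0 \<Longrightarrow> l a (x0 a) \<le> l b (x0 b)"
    using assms(4) unfolding wardrop_def by blast
  have c: "\<And>x. cost l x = l 1 (x 1) * x 1 + l 2 (x 2) * x 2" unfolding cost_def by simp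
  show ?thesis
  proof (cases "i = 1")
    case True
    have "l 1 (x0 1) * x0 1 + l 2 (x0 2) * x0 2
       \<le> 1/(1 - mu1_class L/2) * (l 1 (xs 1) * xs 1 + l 2 (xs 2) * xs 2)"
      using fx assms(7,8) True
      by (intro core[OF l1 l2]) (use assms(2) in \<open>auto simp: is_flow_def intro!: W Mge Mle\<close>)
    then show ?thesis by (simp add: c)
  next
    case False
    then have i2: "i = 2" using assms(6) by auto
    have "l 2 (x0 2) * x0 2 + l 1 (x0 1) * x0 1
       \<le> 1/(1 - mu1_class L/2) * (l 2 (xs 2) * xs 2 + l 1 (xs 1) * xs 1)"
      using fx assms(7,8) i2
      by (intro core[OF l2 l1]) (use assms(3) in \<open>auto simp: is_flow_def intro!: W Mge Mle\<close>)
    then show ?thesis by (simp add: c add.commute)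
  qed
qed

end
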